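(* Let $P$ be a probability distribution on $\mathbb{R}^p$ with $\mu_4=\int\|\boldsymbol{x}\|_2^4\,P(d\boldsymbol{x})<\infty$, and let $1\le d\le p$. Let $\mathcal{F}_d=\{f_Q : Q\in\mathcal{Q}_d\}$. If $\boldsymbol{Y}_1,\dots,\boldsymbol{Y}_m$ are i.i.d. with law $P$, then \[R_m(\mathcal{F}_d)\le \sqrt{\frac{(p-d)\mu_4}{m}}.\]
   Context: $\mathcal{Q}_d$ denotes the set of all $p\times p$ (orthogonal) projection matrices of rank $d$. For $Q\in\mathcal{Q}_d$, $f_Q:\mathbb{R}^p\to\mathbb{R}$ is $f_Q(\boldsymbol{x})=\boldsymbol{x}^\top(I-Q)\boldsymbol{x}$. For i.i.d. $\boldsymbol{Y}_1,\dots,\boldsymbol{Y}_m\sim P$ and a function class $\mathcal{F}$, with $\sigma_1,\dots,\sigma_m$ i.i.d. Rademacher variables (uniform on $\{+1,-1\}$) independent of the $\boldsymbol{Y}_i$, the population Rademacher complexity is $R_m(\mathcal{F})=\frac1m\mathbb{E}\sup_{f\in\mathcal{F}}\sum_{i=1}^m\sigma_i f(\boldsymbol{Y}_i)$. $\mu_k=\int\|\boldsymbol{x}\|_2^k\,dP$. *)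

theory Defs
  imports "HOL-Analysis.Analysis" "HOL-Probability.Probability"
begin

definition proj_mats :: "nat \<Rightarrow> (real^'p^'p) set" where
  "proj_mats d = {Q. transpose Q = Q \<and> Q ** Q = Q \<and> rank Q = d}"

definition fQ :: "real^'p^'p \<Rightarrow> real^'p \<Rightarrow> real" where
  "fQ Q x = x \<bullet> ((mat 1 - Q) *v x)"

definition F_class :: "nat \<Rightarrow> (real^'p \<Rightarrow> real) set" where
  "F_class d = fQ ` proj_mats d"

text \<open>Population Rademacher complexity: Y_1..Y_m i.i.d. P (product measure), sigma_i
  i.i.d. uniform on {-1,1} independent of Y (expectation over sigma written as a finite average).\<close>
definition rademacher_complexity :: "nat \<Rightarrow> 'a measure \<Rightarrow> ('a \<Rightarrow> real) set \<Rightarrow> real" where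
  "rademacher_complexity m P F =
     (1 / real m) * (\<integral>Y. ((\<Sum>\<sigma>\<in>({..<m} \<rightarrow>\<^sub>E {-1, 1::real}).
          (SUP f\<in>F. \<Sum>i<m. \<sigma> i * f (Y i))) / 2 ^ m) \<partial>(PiM {..<m} (\<lambda>_. P)))"

end

theory Submission
  imports Defs
begin


lemma proj_exists:
  assumes "d \<le> CARD('p)"
  shows "\<exists>Q::real^'p^'p. Q \<in> proj_mats d"
proof -
  obtain S :: "'p set" where S: "card S = d" "S \<subseteq> UNIV"
    using obtain_subset_with_card_n[of d "UNIV::'p set"] assms by auto
  define Q :: "real^'p^'p" where "Q = (\<chi> i j. if i = j \<and> i \<in> S then 1 else 0)"
  have sym: "transpose Q = Q"
    by (auto simp: Q_def transpose_def vec_eq_iff)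
  have idem: "Q ** Q = Q"
  proof -
    have e: "(if i = k \<and> i \<in> S then 1 else 0) * (if k = j \<and> k \<in> S then 1 else 0)
         = (if k = i then (if i = j \<and> i \<in> S then 1 else 0) else (0::real))" for i j k :: 'p
      by auto
    show ?thesis by (simp add: Q_def matrix_matrix_mult_def vec_eq_iff e)
  qed
  have mv: "Q *v x = (\<chi> i. if i \<in> S then x$i else 0)" for x
    by (auto simp: Q_def matrix_vector_mult_def vec_eq_iff if_distrib[of "\<lambda>x. x * _"] cong: if_cong)
  have rng: "range (\<lambda>x. Q *v x) = {x::real^'p. \<forall>i. i \<notin> S \<longrightarrow> x$i = 0}"
  proof (rule set_eqI, rule iffI)
    fix y assume "y \<in> range (\<lambda>x. Q *v x)"
    then show "y \<in> {x::real^'p. \<forall>i. i \<notin> S \<longrightarrow> x$i = 0}" by (auto simp: mv)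
  next
    fix y assume "y \<in> {x::real^'p. \<forall>i. i \<notin> S \<longrightarrow> x$i = 0}"
    then have "Q *v y = y" by (auto simp: mv vec_eq_iff)
    then show "y \<in> range (\<lambda>x. Q *v x)" by (metis rangeI)
  qed
  have "rank Q = d"
    using dim_substandard_cart[where 'a=real and 'n='p, of S] S by (simp add: rank_dim_range rng dim_vec_eq)
  then show ?thesis using sym idem by (auto simp: proj_mats_def)
qed




lemma orth_expand:
  fixes B :: "(real^'p) set"
  assumes fin: "finite B" and orth: "pairwise orthogonal B" and nrm: "\<And>x. x \<in> B \<Longrightarrow> norm x = 1"
    and v: "v \<in> span B"
  shows "v \<bullet> v = (\<Sum>b\<in>B. (b \<bullet> v)^2)"
proof -
  obtain u where u: "v = (\<Sum>c\<in>B. u c *\<^sub>R c)"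
    using v span_finite[OF fin] by auto
  have bv: "b \<bullet> v = u b" if b: "b \<in> B" for b
  proof -
    have "b \<bullet> v = (\<Sum>c\<in>B. u c * (b \<bullet> c))" by (simp add: u inner_sum_right)
    also have "\<dots> = (\<Sum>c\<in>B. if c = b then u b else 0)"
    proof (rule sum.cong[OF refl])
      fix c assume c: "c \<in> B"
      show "u c * (b \<bullet> c) = (if c = b then u b else 0)"
      proof (cases "c = b")
        case True
        have "b \<bullet> b = 1" using nrm[OF b] by (metis norm_eq_1)
        then show ?thesis by (simp add: True)
      next
        case False
        then have "b \<bullet> c = 0" using orth b c False by (simp add: pairwise_def orthogonal_def)
        then show ?thesis using False by (simp only: if_False mult_0_right)
      qed
    qed
    also have "\<dots> = u b" using b fin by simp
    finally show ?thesis .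
  qed
  have "v \<bullet> v = (\<Sum>c\<in>B. u c * (c \<bullet> v))" by (simp add: u inner_sum_left)
  also have "\<dots> = (\<Sum>c\<in>B. (c \<bullet> v)^2)" by (rule sum.cong) (auto simp: bv power2_eq_square)
  finally show ?thesis .
qed

lemma trace_proj:
  fixes Q :: "real^'p^'p"
  assumes "Q \<in> proj_mats d"
  shows "(\<Sum>j\<in>UNIV. Q$j$j) = real d"
proof -
  have sym: "transpose Q = Q" and idem: "Q ** Q = Q" and rk: "rank Q = d"
    using assms by (auto simp: proj_mats_def)
  have symE: "Q$a$b = Q$b$a" for a b
    using arg_cong[OF sym, of "\<lambda>M. M$b$a"] by (simp add: transpose_def)
  have diag: "Q$j$j = (\<Sum>l\<in>UNIV. (Q$l$j)^2)" for j
  proof -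
    have "Q$j$j = (Q**Q)$j$j" by (simp add: idem)
    also have "\<dots> = (\<Sum>l\<in>UNIV. Q$j$l * Q$l$j)" by (simp add: matrix_matrix_mult_def)
    also have "\<dots> = (\<Sum>l\<in>UNIV. (Q$l$j)^2)"
      by (rule sum.cong[OF refl]) (metis symE power2_eq_square)
    finally show ?thesis .
  qed
  define V where "V = range (\<lambda>x. Q *v x)"
  have sub: "subspace V" unfolding V_def
    by (rule linear_subspace_image[OF matrix_vector_mul_linear subspace_UNIV])
  have dimV: "dim V = d" using rk by (simp add: rank_dim_range V_def)
  obtain B where B: "B \<subseteq> V" "pairwise orthogonal B" "\<And>x. x \<in> B \<Longrightarrow> norm x = 1"
      "independent B" "card B = dim V" "span B = V"
    using orthonormal_basis_subspace[OF sub] by metis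
  have fin: "finite B" using B(4) independent_imp_finite by blast
  have Qb: "Q *v b = b" if bB: "b \<in> B" for b
  proof -
    obtain x where "b = Q *v x" using B(1) bB unfolding V_def by blast
    then show ?thesis by (simp add: matrix_vector_mul_assoc idem)
  qed
  have col: "(Q *v axis j 1) $ l = Q$l$j" for j l
    by (simp add: matrix_vector_mult_def axis_def if_distrib[of "\<lambda>x. _ * x"] cong: if_cong)
  have bQ: "b \<bullet> (Q *v axis j 1) = b$j" if "b \<in> B" for b j
  proof -
    have "b \<bullet> (Q *v axis j 1) = (b v* Q) \<bullet> axis j 1" by (simp add: dot_lmul_matrix)
    also have "b v* Q = b" using Qb[OF that] transpose_matrix_vector[of Q b] sym by simp
    finally show ?thesis by (simp add: inner_axis)
  qed
  have "(\<Sum>j\<in>UNIV. Q$j$j) = (\<Sum>j\<in>UNIV. (Q *v axis j 1) \<bullet> (Q *v axis j 1))"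
    by (simp add: diag inner_vec_def col power2_eq_square)
  also have "\<dots> = (\<Sum>j\<in>UNIV. \<Sum>b\<in>B. (b \<bullet> (Q *v axis j 1))^2)"
    using B fin by (intro sum.cong refl orth_expand) (auto simp: V_def)
  also have "\<dots> = (\<Sum>j\<in>UNIV. \<Sum>b\<in>B. (b$j)^2)"
    by (intro sum.cong refl) (simp add: bQ)
  also have "\<dots> = (\<Sum>b\<in>B. \<Sum>j\<in>UNIV. (b$j)^2)" by (rule sum.swap)
  also have "\<dots> = (\<Sum>b\<in>B. 1)"
  proof (rule sum.cong[OF refl])
    fix b assume "b \<in> B"
    then have "b \<bullet> b = 1" using B(3) by (simp add: norm_eq_1)
    then show "(\<Sum>j\<in>UNIV. (b$j)^2) = 1" by (simp add: inner_vec_def power2_eq_square)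
  qed
  also have "\<dots> = real d" using B(5) dimV by simp
  finally show ?thesis .
qed




lemma frob_proj:
  fixes Q :: "real^'p^'p"
  assumes "Q \<in> proj_mats d"
  shows "(\<Sum>j\<in>UNIV. \<Sum>l\<in>UNIV. ((mat 1 - Q)$j$l)^2) = real CARD('p) - real d"
proof -
  have sym: "transpose Q = Q" and idem: "Q ** Q = Q"
    using assms by (auto simp: proj_mats_def)
  have symE: "Q$a$b = Q$b$a" for a b
    using arg_cong[OF sym, of "\<lambda>M. M$b$a"] by (simp add: transpose_def)
  have diag: "(\<Sum>l\<in>UNIV. (Q$j$l)^2) = Q$j$j" for j
  proof -
    have "Q$j$j = (Q**Q)$j$j" by (simp add: idem)
    also have "\<dots> = (\<Sum>l\<in>UNIV. Q$j$l * Q$l$j)" by (simp add: matrix_matrix_mult_def)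
    also have "\<dots> = (\<Sum>l\<in>UNIV. (Q$j$l)^2)"
      by (rule sum.cong[OF refl]) (metis symE power2_eq_square)
    finally show ?thesis by simp
  qed
  have pt: "((mat 1 - Q)$j$l)^2 = (Q$j$l)^2 + (if l = j then 1 - 2 * Q$j$j else 0)" for j l
    by (cases "l = j") (auto simp: mat_def power2_eq_square algebra_simps)
  have row: "(\<Sum>l\<in>UNIV. ((mat 1 - Q)$j$l)^2) = 1 - Q$j$j" for j
  proof -
    have "(\<Sum>l\<in>UNIV. ((mat 1 - Q)$j$l)^2) = (\<Sum>l\<in>UNIV. (Q$j$l)^2 + (if l = j then 1 - 2 * Q$j$j else 0))"
      by (rule sum.cong[OF refl], rule pt)
    also have "\<dots> = 1 - Q$j$j" by (simp add: sum.distrib diag)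
    finally show ?thesis .
  qed
  have "(\<Sum>j\<in>UNIV. \<Sum>l\<in>UNIV. ((mat 1 - Q)$j$l)^2) = (\<Sum>j\<in>UNIV. 1 - Q$j$j)"
    by (rule sum.cong[OF refl], rule row)
  also have "\<dots> = real CARD('p) - real d"
    using trace_proj[OF assms] by (simp add: sum_subtractf)
  finally show ?thesis .
qed

lemma young: "(\<alpha>::real) > 0 \<Longrightarrow> M * A \<le> (\<alpha> * M^2 + A^2 / \<alpha>) / 2"
proof -
  assume a: "\<alpha> > 0"
  have "(\<alpha> * M^2 + A^2 / \<alpha>) / 2 - M * A = (\<alpha> * M - A)^2 / (2 * \<alpha>)"
    using a by (simp add: field_simps power2_eq_square)
  also have "\<dots> \<ge> 0" using a by simp
  finally show ?thesis by simp
qed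

lemma fQ_sum:
  fixes Q :: "real^'p^'p" and Y :: "nat \<Rightarrow> real^'p"
  shows "(\<Sum>i<m. \<sigma> i * fQ Q (Y i)) =
    (\<Sum>j\<in>UNIV. \<Sum>l\<in>UNIV. (mat 1 - Q)$j$l * (\<Sum>i<m. \<sigma> i * (Y i)$j * (Y i)$l))"
proof -
  have "(\<Sum>i<m. \<sigma> i * fQ Q (Y i)) =
     (\<Sum>i<m. \<Sum>j\<in>UNIV. \<Sum>l\<in>UNIV. (mat 1 - Q)$j$l * (\<sigma> i * (Y i)$j * (Y i)$l))"
    by (simp add: fQ_def inner_vec_def matrix_vector_mult_def sum_distrib_left sum_distrib_right mult_ac)
  also have "\<dots> = (\<Sum>j\<in>UNIV. \<Sum>i<m. \<Sum>l\<in>UNIV. (mat 1 - Q)$j$l * (\<sigma> i * (Y i)$j * (Y i)$l))"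
    by (rule sum.swap)
  also have "\<dots> = (\<Sum>j\<in>UNIV. \<Sum>l\<in>UNIV. \<Sum>i<m. (mat 1 - Q)$j$l * (\<sigma> i * (Y i)$j * (Y i)$l))"
    by (simp add: sum.swap[of _ "{..<m}"])
  also have "\<dots> = (\<Sum>j\<in>UNIV. \<Sum>l\<in>UNIV. (mat 1 - Q)$j$l * (\<Sum>i<m. \<sigma> i * (Y i)$j * (Y i)$l))"
    by (simp add: sum_distrib_left)
  finally show ?thesis .
qed

lemma pointwise:
  fixes Q :: "real^'p^'p" and Y :: "nat \<Rightarrow> real^'p"
  assumes "Q \<in> proj_mats d" "\<alpha> > 0"
  shows "(\<Sum>i<m. \<sigma> i * fQ Q (Y i)) \<le>
    (\<alpha> * (real CARD('p) - real d) +
      (\<Sum>j\<in>UNIV. \<Sum>l\<in>UNIV. (\<Sum>i<m. \<sigma> i * (Y i)$j * (Y i)$l)^2) / \<alpha>) / 2"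
proof -
  let ?M = "\<lambda>j l. (mat 1 - Q)$j$l" and ?A = "\<lambda>j l. (\<Sum>i<m. \<sigma> i * (Y i)$j * (Y i)$l)"
  have "(\<Sum>i<m. \<sigma> i * fQ Q (Y i)) = (\<Sum>j\<in>UNIV. \<Sum>l\<in>UNIV. ?M j l * ?A j l)" by (rule fQ_sum)
  also have "\<dots> \<le> (\<Sum>j\<in>UNIV. \<Sum>l\<in>UNIV. (\<alpha> * (?M j l)^2 + (?A j l)^2 / \<alpha>) / 2)"
    by (intro sum_mono young assms(2))
  also have "\<dots> = (\<alpha> * (\<Sum>j\<in>UNIV. \<Sum>l\<in>UNIV. (?M j l)^2) + (\<Sum>j\<in>UNIV. \<Sum>l\<in>UNIV. (?A j l)^2) / \<alpha>) / 2"
    by (simp add: sum_divide_distrib sum.distrib sum_distrib_left add_divide_distrib)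
  also have "\<dots> = (\<alpha> * (real CARD('p) - real d) + (\<Sum>j\<in>UNIV. \<Sum>l\<in>UNIV. (?A j l)^2) / \<alpha>) / 2"
    using frob_proj[OF assms(1)] by (simp only:)
  finally show ?thesis .
qed




lemma sum_pm1: "(\<Sum>x\<in>{-1, 1::real}. g x) = g (-1) + g 1"
  by simp

lemma rad_orth:
  assumes "i < m" "i' < m"
  shows "(\<Sum>\<sigma>\<in>({..<m} \<rightarrow>\<^sub>E {-1, 1::real}). \<sigma> i * \<sigma> i') = (if i = i' then 2^m else 0)"
proof -
  define f where "f = (\<lambda>l (x::real). (if l = i then x else 1) * (if l = i' then x else 1))"
  have P: "(\<Prod>l<m. \<Sum>x\<in>{-1,1::real}. f l x) = (\<Sum>\<sigma>\<in>({..<m} \<rightarrow>\<^sub>E {-1, 1::real}). \<Prod>l<m. f l (\<sigma> l))"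
    by (rule prod_sum_PiE) auto
  have pr: "(\<Prod>l<m. f l (\<sigma> l)) = \<sigma> i * \<sigma> i'" for \<sigma> :: "nat \<Rightarrow> real"
    using assms by (simp add: f_def prod.distrib prod.delta)
  have L: "(\<Sum>\<sigma>\<in>({..<m} \<rightarrow>\<^sub>E {-1, 1::real}). \<sigma> i * \<sigma> i') = (\<Prod>l<m. \<Sum>x\<in>{-1,1::real}. f l x)"
    using P by (simp add: pr)
  show ?thesis
  proof (cases "i = i'")
    case True
    have "(\<Sum>x\<in>{-1,1::real}. f l x) = 2" for l
      by (simp add: f_def True)
    then show ?thesis using L True by simp
  next
    case False
    have "(\<Sum>x\<in>{-1,1::real}. f i x) = 0"
      by (simp add: f_def False)
    then have "(\<Prod>l<m. \<Sum>x\<in>{-1,1::real}. f l x) = 0"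
      using assms by (intro prod_zero) auto
    then show ?thesis using L False by simp
  qed
qed

lemma rad_square:
  fixes c :: "nat \<Rightarrow> real"
  shows "(\<Sum>\<sigma>\<in>({..<m} \<rightarrow>\<^sub>E {-1, 1::real}). (\<Sum>i<m. \<sigma> i * c i)^2) = 2^m * (\<Sum>i<m. (c i)^2)"
proof -
  have "(\<Sum>\<sigma>\<in>({..<m} \<rightarrow>\<^sub>E {-1, 1::real}). (\<Sum>i<m. \<sigma> i * c i)^2)
      = (\<Sum>\<sigma>\<in>({..<m} \<rightarrow>\<^sub>E {-1, 1::real}). \<Sum>i<m. \<Sum>i'<m. c i * c i' * (\<sigma> i * \<sigma> i'))"
    by (simp add: power2_eq_square sum_product mult_ac)
  also have "\<dots> = (\<Sum>i<m. \<Sum>i'<m. \<Sum>\<sigma>\<in>({..<m} \<rightarrow>\<^sub>E {-1, 1::real}). c i * c i' * (\<sigma> i * \<sigma> i'))"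
    by (simp add: sum.swap[of _ "{..<m} \<rightarrow>\<^sub>E {-1, 1::real}"])
  also have "\<dots> = (\<Sum>i<m. \<Sum>i'<m. c i * c i' * (if i = i' then 2^m else 0))"
    by (intro sum.cong refl) (simp add: sum_distrib_left[symmetric] rad_orth)
  also have "\<dots> = 2^m * (\<Sum>i<m. (c i)^2)"
    by (simp add: sum_distrib_left power2_eq_square mult_ac if_distrib[of "\<lambda>x. _ * x"] cong: if_cong)
  finally show ?thesis .
qed

lemma norm4: "(\<Sum>j\<in>UNIV. \<Sum>l\<in>UNIV. ((x::real^'p)$j * x$l)^2) = norm x ^ 4"
proof -
  have n: "norm x ^ 2 = (\<Sum>j\<in>UNIV. (x$j)^2)"
    by (simp only: power2_norm_eq_inner) (simp add: inner_vec_def power2_eq_square)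
  have "norm x ^ 4 = (norm x ^ 2) * (norm x ^ 2)" by (simp add: power_mult[symmetric])
  also have "\<dots> = (\<Sum>j\<in>UNIV. \<Sum>l\<in>UNIV. ((x$j)^2 * (x$l)^2))" by (simp add: n sum_product)
  finally show ?thesis by (simp add: power_mult_distrib)
qed




lemma opt_bound:
  fixes X a b :: real
  assumes a: "a \<ge> 0" and b: "b \<ge> 0" and H: "\<And>\<alpha>. \<alpha> > 0 \<Longrightarrow> X \<le> (\<alpha> * a + b / \<alpha>) / 2"
  shows "X \<le> sqrt (a * b)"
proof (cases "a > 0 \<and> b > 0")
  case True
  define \<alpha> where "\<alpha> = sqrt (b / a)"
  have ap: "\<alpha> > 0" using True by (simp add: \<alpha>_def)
  have 1: "\<alpha> * a = sqrt (a * b)"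
    using True by (simp add: \<alpha>_def real_sqrt_divide real_sqrt_mult field_simps)
  have 2: "b / \<alpha> = sqrt (a * b)"
    using True by (simp add: \<alpha>_def real_sqrt_divide real_sqrt_mult field_simps)
  show ?thesis using H[OF ap] 1 2 by simp
next
  case False
  then have ab0: "a * b = 0" using a b by auto
  show ?thesis
  proof (rule ccontr)
    assume "\<not> X \<le> sqrt (a * b)"
    then have X: "X > 0" using ab0 by simp
    show False
    proof (cases "a = 0")
      case True
      define \<alpha> where "\<alpha> = b / X + 1"
      have ap: "\<alpha> > 0" using X b by (simp add: \<alpha>_def add_nonneg_pos)
      have "X \<le> b / \<alpha> / 2" using H[OF ap] True by simp
      moreover have "b / \<alpha> / 2 < X"
        using X b ap by (simp add: \<alpha>_def field_simps) (smt (verit) mult_nonneg_nonneg mult_pos_pos)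
      ultimately show False by simp
    next
      case False
      then have "b = 0" using ab0 by simp
      define \<alpha> where "\<alpha> = X / (a + 1)"
      have ap: "\<alpha> > 0" using X a by (simp add: \<alpha>_def)
      have "X \<le> \<alpha> * a / 2" using H[OF ap] \<open>b = 0\<close> by simp
      moreover have "\<alpha> * a / 2 < X"
        using X a by (simp add: \<alpha>_def field_simps) (smt (verit) mult_nonneg_nonneg mult_pos_pos)
      ultimately show False by simp
    qed
  qed
qed

lemma card_signs: "card ({..<m} \<rightarrow>\<^sub>E {-1, 1::real}) = 2^m"
  by (simp add: card_PiE numeral_2_eq_2)

lemma G_bound:
  fixes Y :: "nat \<Rightarrow> real^'p"
  assumes d: "d \<le> CARD('p)" and ap: "\<alpha> > 0"
  shows "(\<Sum>\<sigma>\<in>({..<m} \<rightarrow>\<^sub>E {-1, 1::real}). (SUP f\<in>F_class d. \<Sum>i<m. \<sigma> i * f (Y i))) / 2 ^ m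
     \<le> (\<alpha> * (real CARD('p) - real d) + (\<Sum>i<m. norm (Y i) ^ 4) / \<alpha>) / 2"
proof -
  let ?S = "{..<m} \<rightarrow>\<^sub>E {-1, 1::real}"
  let ?k = "real CARD('p) - real d"
  let ?A = "\<lambda>\<sigma>. (\<Sum>j\<in>UNIV. \<Sum>l\<in>UNIV. (\<Sum>i<m. \<sigma> i * (Y i)$j * (Y i)$l)^2)"
  have ne: "F_class d \<noteq> ({} :: (real^'p \<Rightarrow> real) set)" 
  proof -
    obtain Q :: "real^'p^'p" where "Q \<in> proj_mats d" using proj_exists[OF d] by blast
    then show ?thesis unfolding F_class_def by blast
  qed
  have sup: "(SUP f\<in>F_class d. \<Sum>i<m. \<sigma> i * f (Y i)) \<le> (\<alpha> * ?k + ?A \<sigma> / \<alpha>) / 2" for \<sigma>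
  proof (rule cSUP_least[OF ne])
    fix f :: "real^'p \<Rightarrow> real" assume "f \<in> F_class d"
    then obtain Q where Q: "Q \<in> proj_mats d" "f = fQ Q" by (auto simp: F_class_def)
    show "(\<Sum>i<m. \<sigma> i * f (Y i)) \<le> (\<alpha> * ?k + ?A \<sigma> / \<alpha>) / 2"
      using pointwise[OF Q(1) ap, of \<sigma> Y m] Q(2) by simp
  qed
  have sumA: "(\<Sum>\<sigma>\<in>?S. ?A \<sigma>) = 2^m * (\<Sum>i<m. norm (Y i) ^ 4)"
  proof -
    have "(\<Sum>\<sigma>\<in>?S. ?A \<sigma>) = (\<Sum>j\<in>UNIV. \<Sum>l\<in>UNIV. \<Sum>\<sigma>\<in>?S. (\<Sum>i<m. \<sigma> i * ((Y i)$j * (Y i)$l))^2)"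
      by (simp add: sum.swap[of _ ?S] mult.assoc)
    also have "\<dots> = (\<Sum>j\<in>UNIV. \<Sum>l\<in>UNIV. 2^m * (\<Sum>i<m. ((Y i)$j * (Y i)$l)^2))"
      by (simp only: rad_square)
    also have "\<dots> = 2^m * (\<Sum>i<m. \<Sum>j\<in>UNIV. \<Sum>l\<in>UNIV. ((Y i)$j * (Y i)$l)^2)"
      by (simp add: sum_distrib_left sum.swap[of _ "{..<m}"])
    also have "\<dots> = 2^m * (\<Sum>i<m. norm (Y i) ^ 4)" by (simp only: norm4)
    finally show ?thesis .
  qed
  have "(\<Sum>\<sigma>\<in>?S. (SUP f\<in>F_class d. \<Sum>i<m. \<sigma> i * f (Y i))) \<le> (\<Sum>\<sigma>\<in>?S. (\<alpha> * ?k + ?A \<sigma> / \<alpha>) / 2)"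
    by (intro sum_mono sup)
  also have "\<dots> = (2^m * (\<alpha> * ?k) + (\<Sum>\<sigma>\<in>?S. ?A \<sigma>) / \<alpha>) / 2"
    by (simp add: sum_divide_distrib[symmetric] sum.distrib card_signs add_divide_distrib)
  also have "\<dots> = 2^m * ((\<alpha> * ?k + (\<Sum>i<m. norm (Y i) ^ 4) / \<alpha>) / 2)"
    by (subst sumA) (simp add: field_simps)
  finally show ?thesis by (simp add: field_simps)
qed




theorem theorem1:
  fixes P :: "(real^'p) measure" and d m :: nat
  assumes "prob_space P"
    and "sets P = sets borel"
    and "integrable P (\<lambda>x. norm x ^ 4)"
    and "1 \<le> d" and "d \<le> CARD('p)"
    and "m \<ge> 1"
  shows "rademacher_complexity m P (F_class d)
           \<le> sqrt (real (CARD('p) - d) * (\<integral>x. norm x ^ 4 \<partial>P) / real m)"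
proof -
  note P = assms(1) and int4 = assms(3) and d = assms(5) and m1 = assms(6)
  define Pm where "Pm = PiM {..<m} (\<lambda>_. P)"
  define \<mu> where "\<mu> = (\<integral>x. norm x ^ 4 \<partial>P)"
  define k where "k = real CARD('p) - real d"
  define G where "G = (\<lambda>Y::nat \<Rightarrow> real^'p. (\<Sum>\<sigma>\<in>({..<m} \<rightarrow>\<^sub>E {-1, 1::real}).
          (SUP f\<in>F_class d. \<Sum>i<m. \<sigma> i * f (Y i))) / 2 ^ m)"
  have k0: "k \<ge> 0" using d by (simp add: k_def)
  have mu0: "\<mu> \<ge> 0" unfolding \<mu>_def by (rule integral_nonneg_AE) auto
  have psm: "prob_space Pm" unfolding Pm_def by (rule prob_space_PiM) (rule P)
  interpret Pm: prob_space Pm by (rule psm)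
  have fm: "(\<lambda>x::real^'p. norm x ^ 4) \<in> borel_measurable P"
    using int4 by (rule borel_measurable_integrable)
  have comp: "distr Pm P (\<lambda>\<omega>. \<omega> i) = P" if "i < m" for i
    unfolding Pm_def using distr_PiM_component[of "{..<m}" "\<lambda>_. P" i] P that by simp
  have gm: "(\<lambda>\<omega>. \<omega> i) \<in> measurable Pm P" if "i < m" for i
    unfolding Pm_def using that by (intro measurable_component_singleton) auto
  have intc: "integrable Pm (\<lambda>Y. norm (Y i) ^ 4)" if "i < m" for i
    using integrable_distr_eq[OF gm[OF that] fm] comp[OF that] int4 by simp
  have intcv: "(\<integral>Y. norm (Y i) ^ 4 \<partial>Pm) = \<mu>" if "i < m" for i
    using integral_distr[OF gm[OF that] fm] comp[OF that] unfolding \<mu>_def by simp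
  have bound: "integral\<^sup>L Pm G \<le> (\<alpha> * k + (real m * \<mu>) / \<alpha>) / 2" if ap: "\<alpha> > 0" for \<alpha>
  proof (cases "integrable Pm G")
    case False
    then have "integral\<^sup>L Pm G = 0" by (rule not_integrable_integral_eq)
    moreover have "0 \<le> (\<alpha> * k + (real m * \<mu>) / \<alpha>) / 2" using ap k0 mu0 by simp
    ultimately show ?thesis by simp
  next
    case True
    define H where "H = (\<lambda>Y::nat \<Rightarrow> real^'p. \<alpha> * k / 2 + (1 / (2 * \<alpha>)) * (\<Sum>i<m. norm (Y i) ^ 4))"
    have GH: "G Y \<le> H Y" for Y
      using G_bound[OF d ap, where m=m and Y=Y] ap unfolding G_def H_def k_def
      by (simp add: field_simps)
    have intS: "integrable Pm (\<lambda>Y. \<Sum>i<m. norm (Y i) ^ 4)"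
    proof (rule Bochner_Integration.integrable_sum)
      fix i assume "i \<in> {..<m}"
      then show "integrable Pm (\<lambda>Y. norm (Y i) ^ 4)" using intc by simp
    qed
    have intH: "integrable Pm H" unfolding H_def
      by (intro Bochner_Integration.integrable_add Bochner_Integration.integrable_mult_right Pm.integrable_const intS)
    have "integral\<^sup>L Pm G \<le> integral\<^sup>L Pm H"
      using True intH GH by (intro integral_mono) auto
    also have "integral\<^sup>L Pm H = \<alpha> * k / 2 + (1 / (2 * \<alpha>)) * (\<Sum>i<m. \<integral>Y. norm (Y i) ^ 4 \<partial>Pm)"
      unfolding H_def using intS intc by (simp add: integral_sum Pm.prob_space)
    also have "\<dots> = (\<alpha> * k + (real m * \<mu>) / \<alpha>) / 2"
      using intcv ap by (simp add: field_simps)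
    finally show ?thesis .
  qed
  have opt: "integral\<^sup>L Pm G \<le> sqrt (k * (real m * \<mu>))"
    by (rule opt_bound[OF k0 _ bound]) (use mu0 in simp)
  have "rademacher_complexity m P (F_class d) = integral\<^sup>L Pm G / real m"
    unfolding rademacher_complexity_def Pm_def G_def by simp
  also have "\<dots> \<le> sqrt (k * (real m * \<mu>)) / real m"
    using opt m1 by (simp add: divide_right_mono)
  also have "\<dots> = sqrt (k * \<mu> / real m)"
  proof -
    have e: "k * (real m * \<mu>) = (k * \<mu> / real m) * (real m)^2"
      using m1 by (simp add: power2_eq_square field_simps)
    have "sqrt (k * (real m * \<mu>)) = sqrt (k * \<mu> / real m) * real m"
      by (simp only: e real_sqrt_mult) simp
    then show ?thesis using m1 by simp
  qed
  also have "\<dots> = sqrt (real (CARD('p) - d) * (\<integral>x. norm x ^ 4 \<partial>P) / real m)"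
    using d by (simp add: k_def \<mu>_def of_nat_diff)
  finally show ?thesis .
qed


end
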